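(* Fix a round $t$. Let $x_{ti} \in \mathbb{R}^d$ and revenues $r_{ti}$ with $|r_{ti}| \le 1$. Let $\theta^* \in \mathbb{R}^d$, $\alpha_t > 0$, and let $V_t$ be positive definite. Let $z_{ti}$ be real numbers, and let $S_t$ be the chosen assortment. Suppose that for all $i \in S_t$, $$0 \le z_{ti} - x_{ti}^\top\theta^* \le 2\alpha_t\|x_{ti}\|_{V_t^{-1}}.$$ Then $$\tilde R_t(S_t) - R_t(S_t,\theta^* ) \le 2\alpha_t\max_{i\in S_t}\|x_{ti}\|_{V_t^{-1}}.$$
   Context: For an assortment $S$, the MNL expected revenue is $$R_t(S,\theta) = \frac{\sum_{i\in S}r_{ti}\exp(x_{ti}^\top\theta)}{1+\sum_{j\in S}\exp(x_{tj}^\top\theta)},$$ and the optimistic revenue is $$\tilde R_t(S) = \frac{\sum_{i\in S}r_{ti}\exp(z_{ti})}{1+\sum_{j\in S}\exp(z_{tj})}.$$ Also $\|x\|_{V^{-1}} = \sqrt{x^\top V^{-1}x}$. *)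

theory Defs
  imports "HOL-Analysis.Analysis"
begin

definition pos_def_mat :: "real^'d^'d \<Rightarrow> bool" where
  "pos_def_mat V \<longleftrightarrow> transpose V = V \<and> (\<forall>x. x \<noteq> 0 \<longrightarrow> x \<bullet> (V *v x) > 0)"

definition inv_norm :: "real^'d^'d \<Rightarrow> real^'d \<Rightarrow> real" where
  "inv_norm V x = sqrt (x \<bullet> (matrix_inv V *v x))"

definition mnl_revenue :: "'i set \<Rightarrow> ('i \<Rightarrow> real) \<Rightarrow> ('i \<Rightarrow> real^'d) \<Rightarrow> real^'d \<Rightarrow> real" where
  "mnl_revenue S r x \<theta> =
     (\<Sum>i\<in>S. r i * exp (x i \<bullet> \<theta>)) / (1 + (\<Sum>j\<in>S. exp (x j \<bullet> \<theta>)))"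

definition opt_revenue :: "'i set \<Rightarrow> ('i \<Rightarrow> real) \<Rightarrow> ('i \<Rightarrow> real) \<Rightarrow> real" where
  "opt_revenue S r z = (\<Sum>i\<in>S. r i * exp (z i)) / (1 + (\<Sum>j\<in>S. exp (z j)))"

end

theory Submission
  imports Defs
begin

lemma key:
  fixes S :: "'i set" and e d r :: "'i \<Rightarrow> real"
  assumes fin: "finite S" and epos: "\<And>i. i \<in> S \<Longrightarrow> e i > 0"
    and d: "\<And>i. i \<in> S \<Longrightarrow> 0 \<le> d i \<and> d i \<le> D"
    and r: "\<And>i. i \<in> S \<Longrightarrow> \<bar>r i\<bar> \<le> 1"
    and D0: "D \<ge> 0" and Bd: "Bd = 1 + (\<Sum>i\<in>S. e i)" and f: "f = (\<Sum>i\<in>S. r i * e i) / Bd"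
  shows "(\<Sum>i\<in>S. d i * e i * (r i - f)) \<le> D * Bd"
proof -
  have E0: "(\<Sum>i\<in>S. e i) \<ge> 0" using epos by (meson less_imp_le sum_nonneg)
  have Bpos: "Bd > 0" using E0 Bd by simp
  have fB: "f * Bd = (\<Sum>i\<in>S. r i * e i)" using Bpos f by simp
  have "\<bar>\<Sum>i\<in>S. r i * e i\<bar> \<le> (\<Sum>i\<in>S. e i)"
  proof -
    have "\<bar>\<Sum>i\<in>S. r i * e i\<bar> \<le> (\<Sum>i\<in>S. \<bar>r i * e i\<bar>)" by (rule sum_abs)
    also have "\<dots> \<le> (\<Sum>i\<in>S. e i)"
    proof (rule sum_mono)
      fix i assume i: "i \<in> S"
      show "\<bar>r i * e i\<bar> \<le> e i"
        using mult_right_mono[of "\<bar>r i\<bar>" 1 "e i"] r[OF i] epos[OF i] by (simp add: abs_mult)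
    qed
    finally show ?thesis .
  qed
  hence "f * Bd \<ge> (-1) * Bd" using fB Bd by (simp add: abs_le_iff)
  hence fge: "f \<ge> -1" using Bpos by (simp only: mult_le_cancel_right)
  have s1: "(\<Sum>i\<in>S. d i * e i * (r i - f)) \<le> (\<Sum>i\<in>S. D * (e i * max 0 (r i - f)))"
  proof (rule sum_mono)
    fix i assume i: "i \<in> S"
    have "d i * e i * (r i - f) \<le> d i * (e i * max 0 (r i - f))"
    proof -
      have "e i * (r i - f) \<le> e i * max 0 (r i - f)" using epos[OF i] by (intro mult_left_mono) auto
      hence "d i * (e i * (r i - f)) \<le> d i * (e i * max 0 (r i - f))" using d[OF i] epos[OF i] by (intro mult_left_mono) auto
      thus ?thesis by (simp add: mult.assoc)
    qed
    also have "\<dots> \<le> D * (e i * max 0 (r i - f))"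
      using d[OF i] epos[OF i] by (intro mult_right_mono) auto
    finally show "d i * e i * (r i - f) \<le> D * (e i * max 0 (r i - f))" .
  qed
  have s2: "(\<Sum>i\<in>S. e i * max 0 (r i - f)) \<le> Bd"
  proof (cases "f \<ge> 0")
    case True
    have "(\<Sum>i\<in>S. e i * max 0 (r i - f)) \<le> (\<Sum>i\<in>S. e i)"
    proof (rule sum_mono)
      fix i assume i: "i \<in> S"
      have "max 0 (r i - f) \<le> 1" using r[OF i] True by (simp add: abs_le_iff)
      thus "e i * max 0 (r i - f) \<le> e i" using epos[OF i] mult_left_mono[of "max 0 (r i - f)" 1 "e i"] by simp
    qed
    then show ?thesis using Bd by simp
  next
    case False
    have eq: "(\<Sum>i\<in>S. e i * max 0 (r i - f)) = (\<Sum>i\<in>S. e i * (r i - f)) + (\<Sum>i\<in>S. e i * max 0 (f - r i))"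
      by (simp add: sum.distrib[symmetric]) (rule sum.cong, auto simp: max_def algebra_simps)
    have a: "(\<Sum>i\<in>S. e i * (r i - f)) = f * Bd - f * (Bd - 1)"
      using fB Bd by (simp add: algebra_simps sum_subtractf sum_distrib_left)
    have b: "(\<Sum>i\<in>S. e i * max 0 (f - r i)) \<le> (\<Sum>i\<in>S. e i * (f + 1))"
      using r epos fge by (intro sum_mono mult_left_mono) (auto simp: abs_le_iff less_imp_le)
    have c: "(\<Sum>i\<in>S. e i * (f + 1)) = (Bd - 1) * (f + 1)" using Bd by (simp add: sum_distrib_right)
    have c2: "(Bd - 1) * (f + 1) = Bd * f + Bd - f - 1" by (simp add: algebra_simps)
    have "Bd * f < 0" using Bpos False by (simp add: mult_pos_neg)
    show ?thesis using eq a b c c2 \<open>Bd * f < 0\<close> by (simp add: algebra_simps)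
  qed
  have "(\<Sum>i\<in>S. D * (e i * max 0 (r i - f))) = D * (\<Sum>i\<in>S. e i * max 0 (r i - f))"
    by (simp add: sum_distrib_left)
  also have "\<dots> \<le> D * Bd" using s2 D0 by (simp add: mult_left_mono)
  finally show ?thesis using s1 by simp
qed

theorem lemma5:
  fixes S :: "'i set" and x :: "'i \<Rightarrow> real^'d" and r z :: "'i \<Rightarrow> real"
    and \<theta> :: "real^'d" and \<alpha> :: real and V :: "real^'d^'d"
  assumes "finite S" and "S \<noteq> {}"
    and "\<And>i. i \<in> S \<Longrightarrow> \<bar>r i\<bar> \<le> 1"
    and "\<alpha> > 0"
    and "pos_def_mat V"
    and "\<And>i. i \<in> S \<Longrightarrow> 0 \<le> z i - x i \<bullet> \<theta> \<and> z i - x i \<bullet> \<theta> \<le> 2 * \<alpha> * inv_norm V (x i)"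
  shows "opt_revenue S r z - mnl_revenue S r x \<theta> \<le> 2 * \<alpha> * (MAX i\<in>S. inv_norm V (x i))"
proof -
  define D where "D = 2 * \<alpha> * (MAX i\<in>S. inv_norm V (x i))"
  define u where "u i = x i \<bullet> \<theta>" for i
  define d where "d i = z i - u i" for i
  define E where "E s i = exp (u i + s * d i)" for s i
  define N where "N s = (\<Sum>i\<in>S. r i * E s i)" for s
  define B where "B s = 1 + (\<Sum>i\<in>S. E s i)" for s
  define g where "g s = N s / B s" for s
  define N' where "N' s = (\<Sum>i\<in>S. r i * (E s i * d i))" for s
  define B' where "B' s = (\<Sum>i\<in>S. E s i * d i)" for s
  have dD: "0 \<le> d i \<and> d i \<le> D" if i: "i \<in> S" for i
  proof -
    have "inv_norm V (x i) \<le> (MAX i\<in>S. inv_norm V (x i))"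
      using assms(1) i by (intro Max_ge) auto
    hence "2 * \<alpha> * inv_norm V (x i) \<le> D" unfolding D_def using assms(4) by simp
    thus ?thesis using assms(6)[OF i] unfolding d_def u_def by linarith
  qed
  have D0: "D \<ge> 0" using dD assms(2) by fastforce
  have Bpos: "B s > 0" for s
  proof -
    have "(\<Sum>i\<in>S. E s i) \<ge> 0" unfolding E_def by (intro sum_nonneg) auto
    thus ?thesis unfolding B_def by simp
  qed
  have der: "(g has_real_derivative ((N' s * B s - N s * B' s) / (B s)^2)) (at s)" for s
    unfolding g_def[abs_def] N_def[abs_def] B_def[abs_def] N'_def B'_def E_def
    using Bpos[of s] unfolding B_def E_def
    by (auto intro!: derivative_eq_intros sum.cong simp: power2_eq_square mult_ac)
  obtain \<xi> where "g 1 - g 0 = (1 - 0) * ((N' \<xi> * B \<xi> - N \<xi> * B' \<xi>) / (B \<xi>)^2)"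
    using MVT2[of 0 1 g "\<lambda>s. (N' s * B s - N s * B' s) / (B s)^2"] der by auto
  hence eq: "g 1 - g 0 = (N' \<xi> * B \<xi> - N \<xi> * B' \<xi>) / (B \<xi>)^2" by simp
  have "(N' \<xi> * B \<xi> - N \<xi> * B' \<xi>) / (B \<xi>)^2 = (N' \<xi> - g \<xi> * B' \<xi>) / B \<xi>"
    using Bpos[of \<xi>] unfolding g_def by (simp add: field_simps power2_eq_square)
  also have "N' \<xi> - g \<xi> * B' \<xi> = (\<Sum>i\<in>S. d i * E \<xi> i * (r i - g \<xi>))"
    unfolding N'_def B'_def by (simp add: sum_distrib_left sum_subtractf[symmetric] algebra_simps)
  also have "(\<Sum>i\<in>S. d i * E \<xi> i * (r i - g \<xi>)) \<le> D * B \<xi>"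
    by (rule key[OF assms(1) _ dD assms(3) D0, of "E \<xi>"]) (auto simp: E_def B_def g_def N_def mult.commute)
  hence "(\<Sum>i\<in>S. d i * E \<xi> i * (r i - g \<xi>)) / B \<xi> \<le> D"
    using Bpos[of \<xi>] by (simp add: divide_le_eq)
  finally have "g 1 - g 0 \<le> D" using eq by simp
  moreover have "g 1 = opt_revenue S r z" unfolding g_def N_def B_def E_def opt_revenue_def d_def by simp
  moreover have "g 0 = mnl_revenue S r x \<theta>" unfolding g_def N_def B_def E_def mnl_revenue_def u_def by simp
  ultimately show ?thesis unfolding D_def by simp
qed

end
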